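(* Let $3\le p<\omega$ and $0\le n<\omega$. If $2n>p$, then $\mathfrak L(p,n)$ is not representable, i.e. $\mathfrak L(p,n)\notin\mathsf{RRA}$.
   Context: For $3\le p<\omega$, $0\le n<\omega$, $\mathfrak L(p,n)$ is the finite symmetric integral relation algebra with atoms $1',a_0,\dots,a_p,t_1,\dots,t_n$ whose composition of atoms is given, for $0\le i,j\le p$, $i\ne j$, $1\le k,l\le n$, $k\ne l$, by: $a_i;a_i=1'+a_i$; $a_i;a_j=0'\cdot\overline{a_i+a_j}$ (where $0'=\overline{1'}$); $a_i;t_k=t_1+\cdots+t_n$; $t_k;t_k=1'+a_0+\cdots+a_p$; $t_k;t_l=a_0+\cdots+a_p$. $\mathsf{RRA}$ is the class of relation algebras having a representation, i.e. an injective map into $\mathcal P(U)$ for an equivalence relation $U$ on some set, sending the Boolean operations to set operations relative to $U$, $1'$ to the identity relation, converse to relational converse and $;$ to relational composition. *)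

theory Defs
  imports Main
begin

datatype atom = One | A nat | T nat

definition As :: "nat \<Rightarrow> atom set" where
  "As p = A ` {0..p}"

definition Ts :: "nat \<Rightarrow> atom set" where
  "Ts n = T ` {1..n}"

definition At :: "nat \<Rightarrow> nat \<Rightarrow> atom set" where
  "At p n = {One} \<union> As p \<union> Ts n"

text \<open>Composition of atoms (elements of the algebra are subsets of At p n;
  the empty set is 0 and At p n is 1).\<close>
fun atcomp :: "nat \<Rightarrow> nat \<Rightarrow> atom \<Rightarrow> atom \<Rightarrow> atom set" where
  "atcomp p n One b = {b}"
| "atcomp p n (A i) One = {A i}"
| "atcomp p n (T k) One = {T k}"
| "atcomp p n (A i) (A j) =
     (if i = j then {One, A i} else At p n - {One, A i, A j})"
| "atcomp p n (A i) (T k) = Ts n"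
| "atcomp p n (T k) (A i) = Ts n"
| "atcomp p n (T k) (T l) = (if k = l then {One} \<union> As p else As p)"

definition comp :: "nat \<Rightarrow> nat \<Rightarrow> atom set \<Rightarrow> atom set \<Rightarrow> atom set" where
  "comp p n x y = (\<Union>a\<in>x. \<Union>b\<in>y. atcomp p n a b)"

definition conv :: "atom set \<Rightarrow> atom set" where
  "conv x = x"

definition representation ::
  "nat \<Rightarrow> nat \<Rightarrow> ('u \<times> 'u) set \<Rightarrow> (atom set \<Rightarrow> ('u \<times> 'u) set) \<Rightarrow> bool" where
  "representation p n U h \<longleftrightarrow>
     equiv (Field U) U \<and>
     inj_on h (Pow (At p n)) \<and>
     (\<forall>x\<in>Pow (At p n). h x \<subseteq> U) \<and>
     (\<forall>x\<in>Pow (At p n). \<forall>y\<in>Pow (At p n).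
        h (x \<union> y) = h x \<union> h y \<and> h (x \<inter> y) = h x \<inter> h y) \<and>
     (\<forall>x\<in>Pow (At p n). h (At p n - x) = U - h x) \<and>
     h {} = {} \<and> h (At p n) = U \<and>
     h {One} = Id_on (Field U) \<and>
     (\<forall>x\<in>Pow (At p n). h (conv x) = (h x)\<inverse>) \<and>
     (\<forall>x\<in>Pow (At p n). \<forall>y\<in>Pow (At p n). h (comp p n x y) = h x O h y)"

end

theory Submission
  imports Defs
begin

lemma At_simps[simp]:
  "One \<in> At p n" "(A i \<in> At p n) = (i \<le> p)" "(T k \<in> At p n) = (1 \<le> k \<and> k \<le> n)"
  by (auto simp: At_def As_def Ts_def)

lemma As_sub: "As p \<subseteq> At p n" and Ts_sub: "Ts n \<subseteq> At p n"
  by (auto simp: At_def)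

lemma atcomp_sub: "a \<in> At p n \<Longrightarrow> b \<in> At p n \<Longrightarrow> atcomp p n a b \<subseteq> At p n"
  by (cases a; cases b) (auto simp: At_def)

lemma finite_At: "finite (At p n)"
  by (simp add: At_def As_def Ts_def)

lemma rep_inj:
  assumes "representation p n U h"
  shows "inj_on h (Pow (At p n))"
  using assms unfolding representation_def by (elim conjE) assumption

lemma rep_subU:
  assumes "representation p n U h"
  shows "\<forall>x\<in>Pow (At p n). h x \<subseteq> U"
  using assms unfolding representation_def by (elim conjE) assumption

lemma rep_bool:
  assumes "representation p n U h"
  shows "\<forall>x\<in>Pow (At p n). \<forall>y\<in>Pow (At p n). h (x \<union> y) = h x \<union> h y \<and> h (x \<inter> y) = h x \<inter> h y"
  using assms unfolding representation_def by (elim conjE) assumption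

lemma rep_empty:
  assumes "representation p n U h"
  shows "h {} = {}"
  using assms unfolding representation_def by (elim conjE) assumption

lemma rep_top:
  assumes "representation p n U h"
  shows "h (At p n) = U"
  using assms unfolding representation_def by (elim conjE) assumption

lemma rep_One:
  assumes "representation p n U h"
  shows "h {One} = Id_on (Field U)"
  using assms unfolding representation_def by (elim conjE) assumption

lemma rep_convD:
  assumes "representation p n U h"
  shows "\<forall>x\<in>Pow (At p n). h (conv x) = (h x)\<inverse>"
  using assms unfolding representation_def by (elim conjE) assumption

lemma rep_compD:
  assumes "representation p n U h"
  shows "\<forall>x\<in>Pow (At p n). \<forall>y\<in>Pow (At p n). h (comp p n x y) = h x O h y"
  using assms unfolding representation_def by (elim conjE) assumption

lemma rep_un:
  assumes R: "representation p n U h" and "x \<subseteq> At p n" "y \<subseteq> At p n"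
  shows "h (x \<union> y) = h x \<union> h y" and "h (x \<inter> y) = h x \<inter> h y"
proof -
  have "x \<in> Pow (At p n)" "y \<in> Pow (At p n)" using assms by auto
  then show "h (x \<union> y) = h x \<union> h y" and "h (x \<inter> y) = h x \<inter> h y"
    using rep_bool[OF R] by (meson)+
qed

lemma rep_mono:
  assumes R: "representation p n U h" and "x \<subseteq> At p n" "y \<subseteq> At p n" "x \<subseteq> y"
  shows "h x \<subseteq> h y"
proof -
  have "h (x \<union> y) = h x \<union> h y" using rep_un[OF R assms(2,3)] by simp
  moreover have "x \<union> y = y" using assms by blast
  ultimately show ?thesis by auto
qed

lemma rep_union:
  assumes R: "representation p n U h" and "finite S" "S \<subseteq> At p n"
  shows "h S = (\<Union>a\<in>S. h {a})"
  using assms(2,3)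
proof (induction S rule: finite_induct)
  case empty
  then show ?case using rep_empty[OF R] by simp
next
  case (insert x F)
  have "h ({x} \<union> F) = h {x} \<union> h F" using rep_un[OF R, of "{x}" F] insert.prems by simp
  then show ?case using insert by auto
qed

lemma rep_disj:
  assumes R: "representation p n U h" and "a \<in> At p n" "b \<in> At p n" "a \<noteq> b"
  shows "h {a} \<inter> h {b} = {}"
proof -
  have "h ({a} \<inter> {b}) = h {a} \<inter> h {b}" using rep_un[OF R, of "{a}" "{b}"] assms by simp
  moreover have "{a} \<inter> {b} = {}" using assms by auto
  ultimately show ?thesis using rep_empty[OF R] by simp
qed

lemma rep_comp:
  assumes R: "representation p n U h" and "a \<in> At p n" "b \<in> At p n"
  shows "h {a} O h {b} = h (atcomp p n a b)"
proof -
  have "{a} \<in> Pow (At p n)" "{b} \<in> Pow (At p n)" using assms by auto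
  then have "h (comp p n {a} {b}) = h {a} O h {b}" using rep_compD[OF R] by blast
  moreover have "comp p n {a} {b} = atcomp p n a b" by (simp add: comp_def)
  ultimately show ?thesis by simp
qed

lemma rep_conv:
  assumes R: "representation p n U h" and "a \<in> At p n"
  shows "(h {a})\<inverse> = h {a}"
proof -
  have "{a} \<in> Pow (At p n)" using assms by auto
  then have "h (conv {a}) = (h {a})\<inverse>" using rep_convD[OF R] by blast
  then show ?thesis by (simp add: conv_def)
qed

lemma rep_sub: "representation p n U h \<Longrightarrow> a \<in> At p n \<Longrightarrow> h {a} \<subseteq> U"
  using rep_subU[of p n U h] by auto

theorem corollary7:
  fixes p n :: nat
  assumes "3 \<le> p" and "2 * n > p"
  shows "\<not> (\<exists>(U :: ('u \<times> 'u) set) h. representation p n U h)"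
proof
  assume "\<exists>(U :: ('u \<times> 'u) set) h. representation p n U h"
  then obtain U :: "('u \<times> 'u) set" and h where R: "representation p n U h" by blast
  define H where "H a = h {a}" for a
  have n2: "n \<ge> 2" using assms by linarith
  have HOne: "H One = Id_on (Field U)" using rep_One[OF R] H_def by simp
  have Hconv: "\<And>a. a \<in> At p n \<Longrightarrow> (H a)\<inverse> = H a" using rep_conv[OF R] H_def by simp
  have Hcomp: "\<And>a b. a \<in> At p n \<Longrightarrow> b \<in> At p n \<Longrightarrow> H a O H b = h (atcomp p n a b)"
    using rep_comp[OF R] H_def by simp
  have Hdisj: "\<And>a b u v. a \<in> At p n \<Longrightarrow> b \<in> At p n \<Longrightarrow> a \<noteq> b \<Longrightarrow> (u,v) \<in> H a \<Longrightarrow> (u,v) \<in> H b \<Longrightarrow> False"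
    using rep_disj[OF R] H_def by blast
  have Hsub: "\<And>a. a \<in> At p n \<Longrightarrow> H a \<subseteq> U" using rep_sub[OF R] H_def by simp
  have Hmono: "\<And>a S. a \<in> S \<Longrightarrow> S \<subseteq> At p n \<Longrightarrow> a \<in> At p n \<Longrightarrow> H a \<subseteq> h S"
    using rep_mono[OF R] H_def by simp
  have Hpair: "\<And>a b. a \<in> At p n \<Longrightarrow> b \<in> At p n \<Longrightarrow> h {a, b} = H a \<union> H b"
  proof -
    fix a b assume "a \<in> At p n" "b \<in> At p n"
    then have "h ({a} \<union> {b}) = h {a} \<union> h {b}" using rep_un[OF R, of "{a}" "{b}"] by simp
    moreover have "{a} \<union> {b} = {a, b}" by auto
    ultimately show "h {a, b} = H a \<union> H b" by (simp add: H_def)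
  qed
  have Ts_eq: "\<And>i k. i \<le> p \<Longrightarrow> 1 \<le> k \<Longrightarrow> k \<le> n \<Longrightarrow> H (A i) O H (T k) = h (Ts n)"
    using Hcomp by simp
  have T1in: "T 1 \<in> Ts n" using n2 by (simp add: Ts_def)
  have Tsin: "\<And>k. 1 \<le> k \<Longrightarrow> k \<le> n \<Longrightarrow> T k \<in> Ts n" by (simp add: Ts_def)
  have HA: "\<And>i j. i \<le> p \<Longrightarrow> H (A i) O H (A i) = H One \<union> H (A i)"
    using Hcomp Hpair by simp
  have "U \<noteq> {}"
  proof
    assume U0: "U = {}"
    have "h {} = {}" "h (At p n) = U" using rep_empty[OF R] rep_top[OF R] by auto
    moreover have "inj_on h (Pow (At p n))" using rep_inj[OF R] .
    ultimately have "{} = At p n" using U0 inj_onD[of h "Pow (At p n)" "{}" "At p n"] by simp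
    then show False by (metis At_simps(1) empty_iff)
  qed
  then obtain u v where "(u,v) \<in> U" by auto
  then have x0F: "u \<in> Field U" by (auto simp: Field_def)
  define x0 where "x0 = u"
  have "(x0,x0) \<in> H One" using x0F HOne x0_def by auto
  moreover have "H One \<subseteq> H (T 1) O H (T 1)"
    using Hcomp[of "T 1" "T 1"] Hmono[of One "atcomp p n (T 1) (T 1)"] n2 atcomp_sub[of "T 1" p n "T 1"]
    by auto
  ultimately obtain y where xy: "(x0,y) \<in> H (T 1)" by auto
  have HT1s: "H (T 1) \<subseteq> h (Ts n)" using Hmono[OF T1in Ts_sub] n2 by simp
  have "(x0,y) \<in> H (A 1) O H (T 1)" using xy HT1s Ts_eq[of 1 1] n2 assms by auto
  then obtain w where x0w: "(x0,w) \<in> H (A 1)" and wy: "(w,y) \<in> H (T 1)" by auto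
  define C where "C = {z. (z = x0 \<or> (x0,z) \<in> H (A 0)) \<and> (\<exists>k\<in>{1..n}. (z,y) \<in> H (T k))}"
  have key1: "\<exists>i\<in>{1..p}. (z,w) \<in> H (A i)" if zC: "z \<in> C" for z
  proof -
    from zC obtain k where k: "k \<in> {1..n}" "(z,y) \<in> H (T k)" by (auto simp: C_def)
    have "(y,w) \<in> H (T 1)" using wy Hconv[of "T 1"] n2 by auto
    then have "(z,w) \<in> H (T k) O H (T 1)" using k by auto
    also have "\<dots> = h (atcomp p n (T k) (T 1))" using Hcomp k n2 by simp
    also have "\<dots> \<subseteq> h ({One} \<union> As p)"
    proof (rule rep_mono[OF R])
      show "atcomp p n (T k) (T 1) \<subseteq> At p n" using atcomp_sub[of "T k" p n "T 1"] k n2 by simp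
      show "{One} \<union> As p \<subseteq> At p n" using As_sub[of p n] by simp
      show "atcomp p n (T k) (T 1) \<subseteq> {One} \<union> As p" by auto
    qed
    also have "\<dots> = (\<Union>a\<in>{One} \<union> As p. H a)"
      using rep_union[OF R, of "{One} \<union> As p"] As_sub[of p n] H_def by (auto simp: As_def)
    finally have zw: "(z,w) \<in> H One \<or> (\<exists>i\<le>p. (z,w) \<in> H (A i))" by (auto simp: As_def)
    have znw: "z \<noteq> w"
    proof
      assume "z = w"
      then have "w = x0 \<or> (x0,w) \<in> H (A 0)" using zC by (auto simp: C_def)
      then show False
      proof
        assume "w = x0"
        then show False using x0w x0F HOne x0_def Hdisj[of One "A 1" x0 x0] assms by auto
      next
        assume "(x0,w) \<in> H (A 0)"
        then show False using x0w Hdisj[of "A 0" "A 1" x0 w] assms by auto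
      qed
    qed
    then have "\<exists>i\<le>p. (z,w) \<in> H (A i)" using zw HOne by auto
    then obtain i where i: "i \<le> p" "(z,w) \<in> H (A i)" by auto
    have "i \<noteq> 0"
    proof
      assume "i = 0"
      have "(x0,w) \<in> H (A 0) \<or> (x0,w) \<in> H One \<union> H (A 0)"
      proof (cases "z = x0")
        case True then show ?thesis using i \<open>i = 0\<close> by auto
      next
        case False
        then have "(x0,z) \<in> H (A 0)" using zC by (auto simp: C_def)
        then have "(x0,w) \<in> H (A 0) O H (A 0)" using i \<open>i = 0\<close> by auto
        then show ?thesis using HA[of 0] by auto
      qed
      then show False using x0w Hdisj[of "A 0" "A 1" x0 w] Hdisj[of One "A 1" x0 w] assms by auto
    qed
    then show ?thesis using i by auto
  qed
  define f where "f z = (SOME i. i \<in> {1..p} \<and> (z,w) \<in> H (A i))" for z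
  have fC: "f z \<in> {1..p} \<and> (z,w) \<in> H (A (f z))" if "z \<in> C" for z
    unfolding f_def using someI_ex[OF key1[OF that, unfolded Bex_def]] by blast
  have inC0: "(z,z') \<in> H One \<union> H (A 0)" if "z \<in> C" "z' \<in> C" for z z'
  proof -
    have xF: "(x0,x0) \<in> H One" using x0F HOne x0_def by auto
    from that have a: "z = x0 \<or> (x0,z) \<in> H (A 0)" and b: "z' = x0 \<or> (x0,z') \<in> H (A 0)"
      by (auto simp: C_def)
    have c: "(z,x0) \<in> H (A 0)" if "(x0,z) \<in> H (A 0)" using that Hconv[of "A 0"] by auto
    show ?thesis
    proof (cases "z = x0")
      case True then show ?thesis using b xF by auto
    next
      case False
      then have zx: "(z,x0) \<in> H (A 0)" using a c by auto
      show ?thesis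
      proof (cases "z' = x0")
        case True then show ?thesis using zx by auto
      next
        case False
        then have "(z,z') \<in> H (A 0) O H (A 0)" using zx b by auto
        then show ?thesis using HA[of 0] by auto
      qed
    qed
  qed
  have injf: "inj_on f C"
  proof (rule inj_onI)
    fix z z' assume z: "z \<in> C" and z': "z' \<in> C" and eq: "f z = f z'"
    show "z = z'"
    proof (rule ccontr)
      assume ne: "z \<noteq> z'"
      let ?c = "f z"
      have c: "?c \<in> {1..p}" "(z,w) \<in> H (A ?c)" "(z',w) \<in> H (A ?c)" using fC[OF z] fC[OF z'] eq by auto
      have "(w,z') \<in> H (A ?c)" using c Hconv[of "A ?c"] by auto
      then have "(z,z') \<in> H (A ?c) O H (A ?c)" using c by auto
      then have zz1: "(z,z') \<in> H One \<union> H (A ?c)" using HA[of ?c] c by auto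
      have zz0: "(z,z') \<in> H One \<union> H (A 0)" using inC0[OF z z'] .
      have "(z,z') \<notin> H One" using ne HOne by auto
      then show False using zz1 zz0 Hdisj[of "A 0" "A ?c" z z'] c by auto
    qed
  qed
  have fimg: "f ` C \<subseteq> {1..p}" using fC by auto
  have finC: "finite C" using injf fimg finite_imageD[OF finite_subset[OF fimg]] by auto
  have cardC: "card C \<le> p" using card_inj_on_le[OF injf fimg] by simp
  define L where "L k = {z\<in>C. (z,y) \<in> H (T k)}" for k
  have L2: "card (L k) \<ge> 2" if k: "k \<in> {1..n}" for k
  proof -
    have kA: "T k \<in> At p n" using k by simp
    have "(x0,y) \<in> h (Ts n)" using xy HT1s by auto
    then have "(x0,y) \<in> H (A 0) O H (T k)" using Ts_eq[of 0 k] k by auto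
    then obtain z1 where z1: "(x0,z1) \<in> H (A 0)" "(z1,y) \<in> H (T k)" by auto
    have "(z1,y) \<in> h (Ts n)" using z1 Hmono[OF Tsin Ts_sub] k by auto
    then have "(z1,y) \<in> H (A 0) O H (T k)" using Ts_eq[of 0 k] k by auto
    then obtain z2 where z2: "(z1,z2) \<in> H (A 0)" "(z2,y) \<in> H (T k)" by auto
    have "(x0,z2) \<in> H (A 0) O H (A 0)" using z1 z2 by auto
    then have "(x0,z2) \<in> H One \<union> H (A 0)" using HA[of 0] by auto
    then have z2x: "z2 = x0 \<or> (x0,z2) \<in> H (A 0)" using HOne by auto
    have z1F: "z1 \<in> Field U" using z1 Hsub[of "A 0"] by (auto simp: Field_def)
    have "z1 \<noteq> z2"
    proof
      assume "z1 = z2"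
      then have "(z1,z1) \<in> H (A 0)" using z2 by simp
      moreover have "(z1,z1) \<in> H One" using z1F HOne by auto
      ultimately show False using Hdisj[of One "A 0" z1 z1] by auto
    qed
    moreover have "{z1, z2} \<subseteq> L k" using z1 z2 z2x k by (auto simp: L_def C_def)
    moreover have "finite (L k)" using finC by (auto simp: L_def)
    ultimately have "card {z1, z2} \<le> card (L k)" "card {z1, z2} = 2"
      using card_mono[of "L k" "{z1,z2}"] by auto
    then show ?thesis by simp
  qed
  have Lsub: "(\<Union>k\<in>{1..n}. L k) \<subseteq> C" by (auto simp: L_def)
  have Ldisj: "\<forall>i\<in>{1..n}. \<forall>j\<in>{1..n}. i \<noteq> j \<longrightarrow> L i \<inter> L j = {}"
  proof (intro ballI impI)
    fix i j assume "i \<in> {1..n}" "j \<in> {1..n}" "i \<noteq> j"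
    then show "L i \<inter> L j = {}" using Hdisj[of "T i" "T j"] by (auto simp: L_def)
  qed
  have finL: "\<forall>k\<in>{1..n}. finite (L k)" using finC by (auto simp: L_def)
  have "card (\<Union>k\<in>{1..n}. L k) = (\<Sum>k\<in>{1..n}. card (L k))"
    using card_UN_disjoint[OF _ finL Ldisj] by simp
  also have "\<dots> \<ge> (\<Sum>k\<in>{1..n}. 2)" using L2 by (intro sum_mono) auto
  finally have "card (\<Union>k\<in>{1..n}. L k) \<ge> 2 * n" by simp
  moreover have "card (\<Union>k\<in>{1..n}. L k) \<le> card C" using card_mono[OF finC Lsub] .
  ultimately show False using cardC assms by linarith
qed

end
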